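(* For $\tau=u+iv$ in the upper half-plane $\mathbb{H}$, with $q=e^{2\pi i\tau}$, define \[ H(q):=\sum_{n\ge 0}(-1)^nq^{3n^2+2n}\left(1+q^{2n+1}\right)\sum_{|j|\le n}(-1)^{j}q^{-j^2}, \] \[ H^{-}(\tau):=-\frac{1}{\sqrt{\pi}}\sum_{\varepsilon\in\{0,1\}}(-1)^{\varepsilon}\sum_{n,r\in \mathbb{Z}}\operatorname{sgn}\!\left(2r+\varepsilon+\tfrac 13\right)\Gamma\!\left(\tfrac 12,6\pi\left(2r+\varepsilon+\tfrac 13\right)^2v\right)q^{-\frac 32\left(2r+\varepsilon+\frac 13\right)^2+\frac 12\left(2n+\varepsilon+1\right)^2}, \] and $\widehat{H}(\tau):=q^{\frac13}H(q)+H^{-}(\tau)$. Let $Q(\mathbf{n}):=3n_1^2-n_2^2$ for $\mathbf{n}=(n_1,n_2)^T\in\mathbb{R}^2$, with associated bilinear form $B(\mathbf{x},\mathbf{y}):=Q(\mathbf{x}+\mathbf{y})-Q(\mathbf{x})-Q(\mathbf{y})=6x_1y_1-2x_2y_2$, and let $\mathbf{c_1}:=(1,3)^T$, $\mathbf{c_2}:=(-1,3)^T$, $\mathbf{a}:=(\frac13,0)^T$, $\mathbf{b}:=(\frac1{12},-\frac14)^T$. Define \[ \vartheta_{\mathbf{a},\mathbf{b}}(\tau):=\sum_{\mathbf{n}\in\mathbb{Z}^2+\mathbf{a}}\left(E\!\left(\frac{B(\mathbf{c_1},\mathbf{n})\sqrt v}{\sqrt{-Q(\mathbf{c_1})}}\right)-E\!\left(\frac{B(\mathbf{c_2},\mathbf{n})\sqrt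 v}{\sqrt{-Q(\mathbf{c_2})}}\right)\right)e^{2\pi i B(\mathbf{b},\mathbf{n})}q^{Q(\mathbf{n})}, \] where $E(w):=2\int_0^w e^{-\pi t^2}\,dt$. Then \[ \widehat{H}(\tau)=\frac{e^{-\frac{\pi i}{3}}}{2}\vartheta_{\mathbf{a},\mathbf{b}}(\tau). \]
   Context: For real $\alpha$, $q^{\alpha}:=e^{2\pi i\alpha\tau}$. $\Gamma(a,x):=\int_x^\infty e^{-t}t^{a-1}\,dt$ is the incomplete gamma function. $\operatorname{sgn}(x)=x/|x|$ for $x\ne0$ and $\operatorname{sgn}(0)=0$. Note $Q(\mathbf{c_1})=Q(\mathbf{c_2})=-6$. *)

theory Defs
  imports "HOL-Analysis.Analysis"
begin

definition qpow :: "complex \<Rightarrow> real \<Rightarrow> complex" where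
  "qpow \<tau> \<alpha> = exp (2 * complex_of_real pi * \<i> * complex_of_real \<alpha> * \<tau>)"

definition Gamma_inc :: "real \<Rightarrow> real \<Rightarrow> real" where
  "Gamma_inc a x = integral {x..} (\<lambda>t. exp (- t) * t powr (a - 1))"

definition Eerr :: "real \<Rightarrow> real" where
  "Eerr w = 2 * (LBINT t=0..w. exp (- pi * t\<^sup>2))"

definition H :: "complex \<Rightarrow> complex" where
  "H q = (\<Sum>n::nat. (-1) ^ n * q powi (3 * int n ^ 2 + 2 * int n) * (1 + q powi (2 * int n + 1))
            * (\<Sum>j\<in>{- int n..int n}. (-1) powi j * q powi (- (j ^ 2))))"

definition Hminus :: "complex \<Rightarrow> complex" where
  "Hminus \<tau> = - (1 / complex_of_real (sqrt pi)) *
     (\<Sum>\<epsilon>\<in>{0::int, 1}. (-1) powi \<epsilon> *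
        (\<Sum>\<^sub>\<infinity>(n, r)\<in>(UNIV :: (int \<times> int) set).
           complex_of_real (sgn (2 * of_int r + of_int \<epsilon> + 1/3)
             * Gamma_inc (1/2) (6 * pi * (2 * of_int r + of_int \<epsilon> + 1/3)\<^sup>2 * Im \<tau>))
           * qpow \<tau> (- 3/2 * (2 * of_int r + of_int \<epsilon> + 1/3)\<^sup>2
                     + 1/2 * (2 * of_int n + of_int \<epsilon> + 1)\<^sup>2)))"

definition Hhat :: "complex \<Rightarrow> complex" where
  "Hhat \<tau> = qpow \<tau> (1/3) * H (exp (2 * complex_of_real pi * \<i> * \<tau>)) + Hminus \<tau>"

definition Qf :: "real \<times> real \<Rightarrow> real" where
  "Qf x = 3 * (fst x)\<^sup>2 - (snd x)\<^sup>2"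

definition Bf :: "real \<times> real \<Rightarrow> real \<times> real \<Rightarrow> real" where
  "Bf x y = Qf (x + y) - Qf x - Qf y"

definition c1 :: "real \<times> real" where "c1 = (1, 3)"
definition c2 :: "real \<times> real" where "c2 = (-1, 3)"
definition avec :: "real \<times> real" where "avec = (1/3, 0)"
definition bvec :: "real \<times> real" where "bvec = (1/12, -1/4)"

definition theta_ab :: "complex \<Rightarrow> complex" where
  "theta_ab \<tau> = (\<Sum>\<^sub>\<infinity>(k1, k2)\<in>(UNIV :: (int \<times> int) set).
     (let n = (of_int k1, of_int k2) + avec in
       complex_of_real (Eerr (Bf c1 n * sqrt (Im \<tau>) / sqrt (- Qf c1))
                       - Eerr (Bf c2 n * sqrt (Im \<tau>) / sqrt (- Qf c2)))
       * exp (2 * complex_of_real pi * \<i> * complex_of_real (Bf bvec n))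
       * qpow \<tau> (Qf n)))"

end

theory Submission
  imports Defs
begin


definition gau :: "real \<Rightarrow> real" where "gau t = exp (- pi * t\<^sup>2)"
definition Phi :: "real \<Rightarrow> real" where "Phi x = integral {0..x} gau"

lemma cont_gau: "continuous_on S gau"
  unfolding gau_def by (intro continuous_intros)

lemma Eerr_nonneg_Phi: assumes "x \<ge> 0" shows "Eerr x = 2 * Phi x"
proof -
  have "(LBINT t=ereal 0..ereal x. gau t) = integral {0..x} gau"
    by (rule interval_integral_eq_integral[OF assms]) (intro borel_integrable_atLeastAtMost' cont_gau)
  thus ?thesis unfolding Eerr_def Phi_def gau_def by (simp add: zero_ereal_def)
qed

lemma Eerr_odd: "Eerr (- x) = - Eerr x"
proof -
  have *: "(LBINT t=0..(-x). exp (- pi * t\<^sup>2)) = - (LBINT t=0..x. exp (- pi * t\<^sup>2))" for x :: real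
  proof -
    have "(LBINT t=0..(-x). exp (- pi * t\<^sup>2)) = (LBINT t=0..(-x). exp (- pi * (-t)\<^sup>2))" by simp
    also have "\<dots> = - (LBINT t=0..x. exp (- pi * t\<^sup>2))"
      by (subst interval_integral_reflect) (simp add: interval_integral_endpoints_reverse[of _ 0])
    finally show ?thesis .
  qed
  show ?thesis unfolding Eerr_def using * by simp
qed

lemma Phi_deriv: assumes "u > 0" shows "(Phi has_real_derivative gau u) (at u)"
proof -
  have "((\<lambda>x. integral {0..x} gau) has_vector_derivative gau u) (at u within {0..u+1})"
    by (rule integral_has_vector_derivative) (use assms cont_gau in auto)
  hence "((\<lambda>x. integral {0..x} gau) has_vector_derivative gau u) (at u)"
    by (subst (asm) at_within_interior) (use assms in auto)
  thus ?thesis unfolding Phi_def has_real_derivative_iff_has_vector_derivative .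
qed

lemma Phi_cont: "continuous_on {0..b} Phi"
  unfolding Phi_def[abs_def]
  by (rule indefinite_integral_continuous_1) (intro integrable_continuous_real cont_gau)

definition Psi :: "real \<Rightarrow> real" where "Psi y = 2 * sqrt pi * Phi (sqrt (y / pi))"

lemma Psi_cont: "continuous_on {0..(b::real)} Psi"
proof -
  have "continuous_on {0..b} (\<lambda>y. Phi (sqrt (y / pi)))"
    by (rule continuous_on_compose2[OF Phi_cont[of "sqrt (b/pi)"]]) (auto intro!: continuous_intros simp: divide_right_mono)
  thus ?thesis unfolding Psi_def[abs_def] by (intro continuous_intros)
qed


lemma Psi_deriv: assumes "y > 0" shows "(Psi has_real_derivative (exp (- y) * y powr (1/2 - 1))) (at y)"
proof -
  have s: "sqrt (y/pi) > 0" using assms by simp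
  have "(Psi has_real_derivative (2 * sqrt pi * (gau (sqrt (y/pi)) * (inverse (sqrt (y/pi)) / 2 * (1/pi))))) (at y)"
  proof -
    have d1: "((\<lambda>y. sqrt (y/pi)) has_real_derivative (inverse (sqrt (y/pi)) / 2 * (1/pi))) (at y)"
    proof -
      have yp: "y / pi > 0" using assms by simp
      have "((\<lambda>y. y / pi) has_real_derivative 1/pi) (at y)"
        using DERIV_cdivide[OF DERIV_ident, of pi y] by simp
      from DERIV_chain2[OF DERIV_real_sqrt[OF yp] this] show ?thesis .
    qed
    have "((\<lambda>x. Phi (sqrt (x / pi))) has_real_derivative gau (sqrt (y/pi)) * (inverse (sqrt (y/pi)) / 2 * (1/pi))) (at y)"
      by (rule DERIV_chain2[OF Phi_deriv[OF s] d1])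
    from DERIV_cmult[OF this, of "2 * sqrt pi"] show ?thesis unfolding Psi_def[abs_def] .
  qed
  moreover have "2 * sqrt pi * (gau (sqrt (y/pi)) * (inverse (sqrt (y/pi)) / 2 * (1/pi))) = exp (- y) * y powr (1/2 - 1)"
  proof -
    have "gau (sqrt (y/pi)) = exp (- y)" unfolding gau_def using assms by simp
    moreover have "y powr (1/2 - 1) = inverse (sqrt y)"
      using assms by (simp add: powr_minus powr_half_sqrt[symmetric] powr_diff)
    moreover have "sqrt pi * (inverse (sqrt (y/pi)) * (1/pi)) = inverse (sqrt y)"
      using assms by (simp add: real_sqrt_divide field_simps)
    moreover have "2 * sqrt pi * (gau (sqrt (y/pi)) * (inverse (sqrt (y/pi)) / 2 * (1/pi)))
       = gau (sqrt (y/pi)) * (sqrt pi * (inverse (sqrt (y/pi)) * (1/pi)))" by simp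
    ultimately show ?thesis by simp
  qed
  ultimately show ?thesis by simp
qed

definition fG :: "real \<Rightarrow> real" where "fG t = exp (- t) * t powr (1/2 - 1)"

lemma Phi0: "Phi 0 = 0" unfolding Phi_def by simp
lemma Psi0: "Psi 0 = 0" unfolding Psi_def by (simp add: Phi0)

lemma fG_nonneg: "fG t \<ge> 0" unfolding fG_def by simp

lemma Gamma_inc_has_integral:
  assumes y: "y > 0"
  shows "(fG has_integral (sqrt pi - Psi y)) {y..}" "Gamma_inc (1/2) y = sqrt pi - Psi y"
proof -
  have G0: "(fG has_integral sqrt pi) {0..}"
  proof -
    have "((\<lambda>t::real. t powr (1/2 - 1) / exp t) has_integral Gamma (1/2::real)) {0..}"
      by (rule Gamma_integral_real) simp
    moreover have "(\<lambda>t. t powr (1/2 - 1) / exp t) = fG"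
      by (auto simp: fG_def exp_minus field_simps)
    ultimately show ?thesis by (simp add: Gamma_one_half_real)
  qed
  have G1: "(fG has_integral (Psi y - Psi 0)) {0..y}"
    by (rule fundamental_theorem_of_calculus_interior)
       (use y Psi_cont Psi_deriv in \<open>auto simp: fG_def has_real_derivative_iff_has_vector_derivative\<close>)
  have "fG absolutely_integrable_on {0..}"
    by (rule nonnegative_absolutely_integrable_1) (use G0 fG_nonneg in auto)
  hence "fG absolutely_integrable_on {y..}"
    by (rule set_integrable_subset) (use y in auto)
  hence "fG integrable_on {y..}" using set_lebesgue_integral_eq_integral(1) by blast
  then obtain I where I: "(fG has_integral I) {y..}" by blast
  have "(fG has_integral (Psi y - Psi 0 + I)) ({0..y} \<union> {y..})"
    by (rule has_integral_Un[OF G1 I]) (use y in \<open>auto intro: negligible_subset[of "{y}"]\<close>)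
  moreover have "{0..y} \<union> {y..} = {0..}" using y by auto
  ultimately have "Psi y - Psi 0 + I = sqrt pi" using G0 has_integral_unique by metis
  hence "I = sqrt pi - Psi y" by (simp add: Psi0)
  thus "(fG has_integral (sqrt pi - Psi y)) {y..}" using I by simp
  thus "Gamma_inc (1/2) y = sqrt pi - Psi y"
    unfolding Gamma_inc_def using fG_def[abs_def] integral_unique by metis
qed

lemma Gamma_inc_bounds:
  assumes y: "y > 0"
  shows "Gamma_inc (1/2) y \<ge> 0" "Gamma_inc (1/2) y \<le> y powr (1/2 - 1) * exp (- y)"
proof -
  note I = Gamma_inc_has_integral[OF y]
  show "Gamma_inc (1/2) y \<ge> 0" using has_integral_nonneg[OF I(1)] fG_nonneg I(2) by simp
  have E: "((\<lambda>t. y powr (1/2 - 1) * exp (- 1 * t)) has_integral y powr (1/2 - 1) * (exp (- 1 * y) / 1)) {y..}"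
    by (intro has_integral_mult_right has_integral_exp_minus_to_infinity) simp
  have "sqrt pi - Psi y \<le> y powr (1/2 - 1) * (exp (- 1 * y) / 1)"
  proof (rule has_integral_le[OF I(1) E])
    fix t assume "t \<in> {y..}"
    hence "t powr (1/2 - 1) \<le> y powr (1/2 - 1)" using y by (intro powr_mono2') auto
    thus "fG t \<le> y powr (1/2 - 1) * exp (- 1 * t)" unfolding fG_def by (simp add: mult.commute)
  qed
  thus "Gamma_inc (1/2) y \<le> y powr (1/2 - 1) * exp (- y)" using I(2) by simp
qed

lemma Eerr_pos_Gamma:
  assumes x: "x > 0"
  shows "Eerr x = 1 - Gamma_inc (1/2) (pi * x\<^sup>2) / sqrt pi"
proof -
  have "Psi (pi * x\<^sup>2) = sqrt pi * Eerr x"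
    using x by (simp add: Psi_def Eerr_nonneg_Phi)
  thus ?thesis using Gamma_inc_has_integral(2)[of "pi * x\<^sup>2"] x by (simp add: field_simps)
qed

lemma Eerr_Gamma:
  assumes x: "x \<noteq> 0"
  shows "Eerr x = sgn x * (1 - Gamma_inc (1/2) (pi * x\<^sup>2) / sqrt pi)"
proof (cases "x > 0")
  case True thus ?thesis using Eerr_pos_Gamma by simp
next
  case False
  hence "- x > 0" using x by simp
  from Eerr_pos_Gamma[OF this] have "Eerr (- x) = 1 - Gamma_inc (1/2) (pi * x\<^sup>2) / sqrt pi" by simp
  thus ?thesis using False x by (simp add: Eerr_odd)
qed



lemma exp_powi: "exp (z::complex) powi k = exp (of_int k * z)"
proof (cases "k \<ge> 0")
  case True
  then obtain n where "k = int n" using nonneg_int_cases by blast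
  thus ?thesis by (simp add: exp_of_nat_mult power_int_def)
next
  case False
  hence "k = - int (nat (- k))" by simp
  then obtain n where "k = - int n" by blast
  thus ?thesis by (simp add: exp_of_nat_mult power_int_minus exp_minus power_int_def power_inverse)
qed

lemma qpow_add: "qpow \<tau> (a + b) = qpow \<tau> a * qpow \<tau> b"
  unfolding qpow_def by (simp add: algebra_simps exp_add[symmetric])

lemma norm_qpow: "norm (qpow \<tau> a) = exp (- 2 * pi * a * Im \<tau>)"
  unfolding qpow_def by (simp add: norm_exp_eq_Re)

lemma qpow_int: "exp (2 * complex_of_real pi * \<i> * \<tau>) powi k = qpow \<tau> (of_int k)"
  unfolding qpow_def exp_powi by (simp add: algebra_simps)

lemma exp_pi_int: "exp (of_int k * (complex_of_real pi * \<i>)) = (-1) powi k"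
proof -
  have "exp (complex_of_real pi * \<i>) powi k = exp (of_int k * (complex_of_real pi * \<i>))"
    by (rule exp_powi)
  thus ?thesis by simp
qed

lemma phase_lemma: "exp (2 * complex_of_real pi * \<i> * complex_of_real (of_int K / 2 + 1/6))
   = (-1) powi K * exp (complex_of_real pi * \<i> / 3)"
proof -
  have gen: "2 * a * b * (c / 2 + 1/6) = c * (a * b) + a * b / 3" for a b c :: complex
    by (simp add: field_simps)
  have "2 * complex_of_real pi * \<i> * complex_of_real (of_int K / 2 + 1/6)
        = of_int K * (complex_of_real pi * \<i>) + complex_of_real pi * \<i> / 3"
    using gen[of "complex_of_real pi" "\<i>" "of_int K"] by simp
  thus ?thesis by (simp only: exp_add exp_pi_int)
qed

lemma third_ne0: "real_of_int k + 1/3 \<noteq> 0"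
proof
  assume "real_of_int k + 1/3 = 0"
  hence "real_of_int (3 * k + 1) = 0" by simp
  hence "3 * k + 1 = 0" by linarith
  thus False by presburger
qed

definition om :: "int \<Rightarrow> int \<Rightarrow> complex" where
  "om k1 k2 = (-1) powi (k1 + k2) * exp (complex_of_real pi * \<i> / 3)"
definition Qn :: "int \<Rightarrow> int \<Rightarrow> real" where
  "Qn k1 k2 = 3 * (of_int k1 + 1/3)\<^sup>2 - (of_int k2)\<^sup>2"
definition Gt :: "complex \<Rightarrow> real \<Rightarrow> real" where
  "Gt \<tau> x = Gamma_inc (1/2) (6 * pi * x\<^sup>2 * Im \<tau>) / sqrt pi"
definition dd :: "int \<Rightarrow> int \<Rightarrow> real" where "dd k1 k2 = of_int k1 + 1/3 - of_int k2"
definition pp :: "int \<Rightarrow> int \<Rightarrow> real" where "pp k1 k2 = of_int k1 + 1/3 + of_int k2"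

definition Hol :: "complex \<Rightarrow> int \<times> int \<Rightarrow> complex" where
  "Hol \<tau> k = (case k of (k1, k2) \<Rightarrow>
     of_real (sgn (dd k1 k2) + sgn (pp k1 k2)) * om k1 k2 * qpow \<tau> (Qn k1 k2))"
definition N1 :: "complex \<Rightarrow> int \<times> int \<Rightarrow> complex" where
  "N1 \<tau> k = (case k of (k1, k2) \<Rightarrow>
     - of_real (sgn (dd k1 k2) * Gt \<tau> (dd k1 k2)) * om k1 k2 * qpow \<tau> (Qn k1 k2))"
definition N2 :: "complex \<Rightarrow> int \<times> int \<Rightarrow> complex" where
  "N2 \<tau> k = (case k of (k1, k2) \<Rightarrow>
     - of_real (sgn (pp k1 k2) * Gt \<tau> (pp k1 k2)) * om k1 k2 * qpow \<tau> (Qn k1 k2))"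

lemma dd_ne0: "dd k1 k2 \<noteq> 0"
  using third_ne0[of "k1 - k2"] unfolding dd_def by (simp add: algebra_simps)
lemma pp_ne0: "pp k1 k2 \<noteq> 0"
  using third_ne0[of "k1 + k2"] unfolding pp_def by (simp add: algebra_simps)

lemma Eerr_scaled:
  assumes "c > 0" "x \<noteq> 0"
  shows "Eerr (c * x) = sgn x * (1 - Gamma_inc (1/2) (pi * c\<^sup>2 * x\<^sup>2) / sqrt pi)"
  using Eerr_Gamma[of "c * x"] assms by (simp add: sgn_mult power_mult_distrib mult.assoc)

lemma term_decomp:
  assumes v: "Im \<tau> > 0"
  shows "(let n = (of_int k1, of_int k2) + avec in
       complex_of_real (Eerr (Bf c1 n * sqrt (Im \<tau>) / sqrt (- Qf c1))
                       - Eerr (Bf c2 n * sqrt (Im \<tau>) / sqrt (- Qf c2)))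
       * exp (2 * complex_of_real pi * \<i> * complex_of_real (Bf bvec n))
       * qpow \<tau> (Qf n)) = Hol \<tau> (k1, k2) + N1 \<tau> (k1, k2) + N2 \<tau> (k1, k2)"
proof -
  define c where "c = 6 * sqrt (Im \<tau>) / sqrt 6"
  have c: "c > 0" using v by (simp add: c_def)
  have c2: "pi * c\<^sup>2 = 6 * pi * Im \<tau>"
    using v by (simp add: c_def power_divide power_mult_distrib)
  have e1: "Bf c1 ((of_int k1, of_int k2) + avec) * sqrt (Im \<tau>) / sqrt (- Qf c1) = c * dd k1 k2"
    by (simp add: Bf_def Qf_def c1_def avec_def c_def dd_def power2_eq_square algebra_simps)
  have e2: "Bf c2 ((of_int k1, of_int k2) + avec) * sqrt (Im \<tau>) / sqrt (- Qf c2) = c * (- pp k1 k2)"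
    by (simp add: Bf_def Qf_def c2_def avec_def c_def pp_def power2_eq_square algebra_simps)
  have e3: "Bf bvec ((of_int k1, of_int k2) + avec) = of_int (k1 + k2) / 2 + 1/6"
    by (simp add: Bf_def Qf_def bvec_def avec_def power2_eq_square algebra_simps)
  have e4: "Qf ((of_int k1, of_int k2) + avec) = Qn k1 k2"
    by (simp add: Qf_def avec_def Qn_def)
  have ph: "exp (2 * complex_of_real pi * \<i> * complex_of_real (of_int (k1 + k2) / 2 + 1/6)) = om k1 k2"
    unfolding om_def by (rule phase_lemma)
  have E1: "Eerr (c * dd k1 k2) = sgn (dd k1 k2) * (1 - Gt \<tau> (dd k1 k2))"
    using Eerr_scaled[OF c dd_ne0] c2 by (simp add: Gt_def mult.assoc mult.commute mult.left_commute)
  have E2: "Eerr (c * (- pp k1 k2)) = - sgn (pp k1 k2) * (1 - Gt \<tau> (pp k1 k2))"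
    using Eerr_scaled[OF c, of "- pp k1 k2"] pp_ne0 c2 by (simp add: Gt_def mult.assoc mult.commute mult.left_commute)
  show ?thesis
    unfolding Let_def e1 e2 e3 e4 ph E1 E2 Hol_def N1_def N2_def prod.case
    by (simp add: algebra_simps)
qed



lemma summable_bound:
  fixes f :: "'a \<Rightarrow> complex" and g :: "'a \<Rightarrow> real"
  assumes "g summable_on A" "\<And>x. x \<in> A \<Longrightarrow> norm (f x) \<le> g x"
  shows "f summable_on A"
proof -
  have "(\<lambda>x. norm (f x)) summable_on A"
    by (rule summable_on_comparison_test[OF assms(1)]) (use assms(2) in auto)
  thus ?thesis by (rule abs_summable_summable)
qed

lemma geo_nat_summable: assumes "(c::real) > 0" shows "(\<lambda>n::nat. exp (- c * real n)) summable_on UNIV"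
proof -
  have "(\<lambda>n::nat. exp (- c * real n)) = (\<lambda>n. exp (- c) ^ n)"
    by (auto simp: exp_of_nat_mult[symmetric] mult.commute)
  moreover have "summable (\<lambda>n. exp (- c) ^ n)" using assms by (intro summable_geometric) simp
  ultimately show ?thesis by (subst summable_on_UNIV_nonneg_real_iff) auto
qed

lemma geo_int_summable: assumes "(c::real) > 0" shows "(\<lambda>k::int. exp (- c * \<bar>of_int k\<bar>)) summable_on UNIV"
proof -
  let ?g = "\<lambda>k::int. exp (- c * \<bar>of_int k\<bar>)"
  have A: "?g summable_on range int"
    by (subst summable_on_reindex) (use geo_nat_summable[OF assms] in \<open>auto simp: o_def\<close>)
  have "(\<lambda>n::nat. ?g (- int n - 1)) summable_on UNIV"
  proof (rule summable_on_comparison_test[OF geo_nat_summable[OF assms]])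
    fix n :: nat
    show "?g (- int n - 1) \<le> exp (- c * real n)" using assms by simp
  qed simp
  hence B: "?g summable_on range (\<lambda>n::nat. - int n - 1)"
    by (subst summable_on_reindex) (auto simp: o_def inj_on_def)
  have "UNIV = range int \<union> range (\<lambda>n::nat. - int n - 1)"
  proof -
    have "k \<in> range int \<union> range (\<lambda>n::nat. - int n - 1)" for k :: int
    proof (cases "k \<ge> 0")
      case True thus ?thesis by (metis UnI1 nonneg_int_cases rangeI)
    next
      case False
      hence "k = - int (nat (- k - 1)) - 1" by simp
      thus ?thesis by blast
    qed
    thus ?thesis by blast
  qed
  thus ?thesis using summable_on_union[OF A B] by simp
qed

definition maj :: "real \<Rightarrow> int \<times> int \<Rightarrow> real" where
  "maj c k = exp (- c * \<bar>of_int (fst k)\<bar>) * exp (- c * \<bar>of_int (snd k)\<bar>)"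

lemma maj_summable: assumes "c > 0" shows "maj c summable_on UNIV"
proof -
  let ?g = "\<lambda>k::int. exp (- c * \<bar>of_int k\<bar>)"
  have "maj c summable_on Sigma UNIV (\<lambda>_. UNIV)"
  proof (rule summable_on_SigmaI)
    fix x :: int
    show "((\<lambda>y. maj c (x, y)) has_sum (?g x * infsum ?g UNIV)) UNIV"
      unfolding maj_def fst_conv snd_conv
      by (intro has_sum_cmult_right has_sum_infsum geo_int_summable assms)
  next
    show "(\<lambda>x. ?g x * infsum ?g UNIV) summable_on UNIV"
      by (intro summable_on_cmult_left geo_int_summable assms)
  qed (auto simp: maj_def)
  thus ?thesis by simp
qed

lemma maj_summable_cmult: assumes "c > 0" shows "(\<lambda>k. M * maj c k) summable_on UNIV"
  by (intro summable_on_cmult_right maj_summable assms)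

lemma minus_one_powi: "((-1::complex) powi k) = (if even k then 1 else -1)"
proof (cases "k \<ge> 0")
  case True
  then obtain n where "k = int n" using nonneg_int_cases by blast
  thus ?thesis by (simp add: power_int_def)
next
  case False
  hence "k = - int (nat (- k))" by simp
  then obtain n where "k = - int n" by blast
  thus ?thesis by (simp add: power_int_minus power_int_def)
qed

lemma norm_om: "norm (om k1 k2) = 1"
proof -
  have "norm (exp (complex_of_real pi * \<i> / 3)) = 1" by (simp add: norm_exp_eq_Re)
  thus ?thesis unfolding om_def norm_mult minus_one_powi by simp
qed

lemma sq_third: "(real_of_int m + 1/3)\<^sup>2 \<ge> 1/9"
proof (cases "m \<ge> 0")
  case True
  hence "real_of_int m + 1/3 \<ge> 1/3" by simp
    hence "(1/3)\<^sup>2 \<le> (real_of_int m + 1/3)\<^sup>2" by (intro power_mono) auto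
    thus ?thesis by (simp add: power_divide)
next
  case False
  hence "real_of_int m \<le> -1" by simp
  hence "real_of_int m + 1/3 \<le> - 2/3" by simp
    hence "(2/3)\<^sup>2 \<le> (- (real_of_int m + 1/3))\<^sup>2" by (intro power_mono) auto
    thus ?thesis unfolding power2_minus by (simp add: power_divide)
qed

lemma Hol_bound:
  assumes v: "Im \<tau> > 0"
  shows "norm (Hol \<tau> k) \<le> 2 * exp (2 * pi * Im \<tau>) * maj (pi * Im \<tau> / 2) k"
proof -
  obtain k1 k2 where k: "k = (k1, k2)" by fastforce
  define a b t where "a = real_of_int k1" "b = real_of_int k2" "t = a + 1/3"
  let ?v = "Im \<tau>"
  show ?thesis
  proof (cases "sgn (dd k1 k2) + sgn (pp k1 k2) = 0")
    case True
    have "Hol \<tau> k = 0" unfolding Hol_def k prod.case True by simp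
    thus ?thesis using v by (simp add: maj_def)
  next
    case False
    hence same: "(t - b > 0 \<and> t + b > 0) \<or> (t - b < 0 \<and> t + b < 0)"
      using dd_ne0[of k1 k2] pp_ne0[of k1 k2] unfolding dd_def pp_def a_b_t_def
      by (auto simp: sgn_real_def split: if_splits)
    have Q: "Qn k1 k2 = 3 * t\<^sup>2 - b\<^sup>2" unfolding Qn_def a_b_t_def by simp
    have key: "Qn k1 k2 \<ge> (\<bar>a\<bar> + \<bar>b\<bar>) / 2 - 1"
    proof -
      have bt: "\<bar>b\<bar> \<le> \<bar>t\<bar>" using same by auto
      hence "b\<^sup>2 \<le> t\<^sup>2" using abs_le_square_iff by blast
      moreover have "\<bar>a\<bar> \<le> \<bar>t\<bar> + 1/3" unfolding a_b_t_def by simp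
      moreover note bt
      moreover have "2 * t\<^sup>2 \<ge> \<bar>t\<bar> - 5/6"
      proof -
        have h: "0 \<le> (\<bar>t\<bar> - 1/4)\<^sup>2" by simp
        have "(\<bar>t\<bar> - 1/4)\<^sup>2 = \<bar>t\<bar>\<^sup>2 - \<bar>t\<bar>/2 + 1/16" by (simp add: power2_eq_square algebra_simps)
        moreover have "\<bar>t\<bar>\<^sup>2 = t\<^sup>2" by simp
        ultimately show ?thesis using h by linarith
      qed
      ultimately show ?thesis unfolding Q by argo
    qed
    have "norm (Hol \<tau> k) \<le> 2 * exp (- 2 * pi * Qn k1 k2 * ?v)"
    proof -
      have "\<bar>sgn (dd k1 k2) + sgn (pp k1 k2)\<bar> \<le> 2" by (simp add: sgn_real_def)
      moreover have "norm (Hol \<tau> k) = \<bar>sgn (dd k1 k2) + sgn (pp k1 k2)\<bar> * exp (- 2 * pi * Qn k1 k2 * ?v)"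
        unfolding Hol_def k prod.case norm_mult norm_om norm_qpow norm_of_real by simp
      ultimately show ?thesis by (simp add: mult_right_mono)
    qed
    moreover have "exp (- 2 * pi * Qn k1 k2 * ?v) \<le> exp (2 * pi * ?v) * maj (pi * ?v / 2) k"
    proof -
    have "exp (- 2 * pi * Qn k1 k2 * ?v) \<le> exp (- 2 * pi * ((\<bar>a\<bar> + \<bar>b\<bar>) / 2 - 1) * ?v)"
      using key v by (subst exp_le_cancel_iff) (simp add: mult_left_mono mult_right_mono)
    also have "\<dots> = exp (2 * pi * ?v) * exp (- pi * ?v * \<bar>a\<bar>) * exp (- pi * ?v * \<bar>b\<bar>)"
    proof -
      have "- 2 * pi * ((\<bar>a\<bar> + \<bar>b\<bar>) / 2 - 1) * ?v = 2 * pi * ?v + - pi * ?v * \<bar>a\<bar> + - pi * ?v * \<bar>b\<bar>"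
        by (simp add: field_simps)
      thus ?thesis by (simp only: exp_add)
    qed
    also have "\<dots> \<le> exp (2 * pi * ?v) * maj (pi * ?v / 2) k"
    proof -
      have "exp (- pi * ?v * \<bar>a\<bar>) \<le> exp (- (pi * ?v / 2) * \<bar>a\<bar>)"
           "exp (- pi * ?v * \<bar>b\<bar>) \<le> exp (- (pi * ?v / 2) * \<bar>b\<bar>)"
        using v by (auto intro!: mult_right_mono)
      moreover have "maj (pi * ?v / 2) k = exp (- (pi * ?v / 2) * \<bar>a\<bar>) * exp (- (pi * ?v / 2) * \<bar>b\<bar>)"
        unfolding maj_def k a_b_t_def by simp
      ultimately show ?thesis
        by (simp only: mult.assoc) (intro mult_left_mono mult_mono, auto)
    qed
    finally show ?thesis .
    qed
    ultimately have "norm (Hol \<tau> k) \<le> 2 * (exp (2 * pi * ?v) * maj (pi * ?v / 2) k)" by argo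
    thus ?thesis by (simp only: mult.assoc)
  qed
qed



lemma N1_bound:
  assumes v: "Im \<tau> > 0"
  shows "norm (N1 \<tau> k) \<le> ((2 * pi * Im \<tau> / 3) powr (1/2 - 1) / sqrt pi * exp (pi * Im \<tau> / 2)) * maj (pi * Im \<tau> / 2) k"
proof -
  obtain k1 k2 where k: "k = (k1, k2)" by fastforce
  define a b t where "a = real_of_int k1" "b = real_of_int k2" "t = a + 1/3"
  let ?v = "Im \<tau>"
  define d where "d = dd k1 k2"
  have d: "d = t - b" unfolding d_def dd_def a_b_t_def by simp
  have d2: "d\<^sup>2 \<ge> 1/9" using sq_third[of "k1 - k2"] unfolding d_def dd_def by (simp add: algebra_simps)
  have Q: "Qn k1 k2 = 3 * t\<^sup>2 - b\<^sup>2" unfolding Qn_def a_b_t_def by simp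
  define y where "y = 6 * pi * d\<^sup>2 * ?v"
  have y0: "2 * pi * ?v / 3 > 0" using v by simp
  have yge: "y \<ge> 2 * pi * ?v / 3"
  proof -
    have "6 * pi * ?v * (1/9) \<le> 6 * pi * ?v * d\<^sup>2" using d2 v by (intro mult_left_mono) auto
    thus ?thesis unfolding y_def by (simp add: algebra_simps)
  qed
  have ypos: "y > 0" using y0 yge by linarith
  have Gt_eq: "Gt \<tau> d = Gamma_inc (1/2) y / sqrt pi" unfolding Gt_def y_def by simp
  have Gt0: "Gt \<tau> d \<ge> 0" using Gamma_inc_bounds(1)[OF ypos] Gt_eq by simp
  define K where "K = (2 * pi * ?v / 3) powr (1/2 - 1) / sqrt pi"
  have Gt_le: "Gt \<tau> d \<le> K * exp (- y)"
  proof -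
    have "Gamma_inc (1/2) y \<le> y powr (1/2 - 1) * exp (- y)" by (rule Gamma_inc_bounds(2)[OF ypos])
    also have "\<dots> \<le> (2 * pi * ?v / 3) powr (1/2 - 1) * exp (- y)"
      by (intro mult_right_mono powr_mono2') (use y0 yge in auto)
    finally show ?thesis unfolding Gt_eq K_def by (simp add: divide_right_mono)
  qed
  have nN1: "norm (N1 \<tau> k) = Gt \<tau> d * exp (- 2 * pi * Qn k1 k2 * ?v)"
  proof -
    have "\<bar>sgn d * Gt \<tau> d\<bar> = Gt \<tau> d" using Gt0 dd_ne0[of k1 k2] unfolding d_def
      by (simp add: abs_mult sgn_real_def)
    thus ?thesis unfolding N1_def k prod.case norm_mult norm_om norm_qpow norm_of_real norm_minus_cancel d_def
      by simp
  qed
  have X: "6 * d\<^sup>2 + 2 * Qn k1 k2 \<ge> (\<bar>a\<bar> + \<bar>b\<bar>) / 2 - 1/2"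
  proof -
    have e: "6 * d\<^sup>2 + 2 * Qn k1 k2 - (t\<^sup>2 + b\<^sup>2) / 2 = (7 * b - 12 * t)\<^sup>2 / 14 + 17/14 * t\<^sup>2"
      unfolding Q d by (simp add: power2_eq_square field_simps)
    have "(7 * b - 12 * t)\<^sup>2 / 14 + 17/14 * t\<^sup>2 \<ge> 0" by simp
    hence 1: "6 * d\<^sup>2 + 2 * Qn k1 k2 \<ge> (t\<^sup>2 + b\<^sup>2) / 2" using e by argo
    have sq: "x\<^sup>2 \<ge> \<bar>x\<bar> - 1/4" for x :: real
    proof -
      have h: "0 \<le> (\<bar>x\<bar> - 1/2)\<^sup>2" by simp
      have "(\<bar>x\<bar> - 1/2)\<^sup>2 = \<bar>x\<bar>\<^sup>2 - \<bar>x\<bar> + 1/4" by (simp add: power2_eq_square algebra_simps)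
      moreover have "\<bar>x\<bar>\<^sup>2 = x\<^sup>2" by simp
      ultimately show ?thesis using h by argo
    qed
    have "\<bar>a\<bar> \<le> \<bar>t\<bar> + 1/3" unfolding a_b_t_def by simp
    thus ?thesis using 1 sq[of t] sq[of b] by argo
  qed
  have K0: "K \<ge> 0" unfolding K_def by simp
  have N1le: "norm (N1 \<tau> k) \<le> K * (exp (- y) * exp (- 2 * pi * Qn k1 k2 * ?v))"
    unfolding nN1 using Gt_le by (simp add: mult.assoc[symmetric] mult_right_mono)
  have "exp (- y) * exp (- 2 * pi * Qn k1 k2 * ?v) = exp (- (pi * ?v) * (6 * d\<^sup>2 + 2 * Qn k1 k2))"
    unfolding y_def exp_add[symmetric] by (simp add: algebra_simps)
  also have "\<dots> \<le> exp (- (pi * ?v) * ((\<bar>a\<bar> + \<bar>b\<bar>) / 2 - 1/2))"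
    using X v by (subst exp_le_cancel_iff) (simp add: mult_left_mono)
  also have "\<dots> = exp (pi * ?v / 2) * maj (pi * ?v / 2) k"
  proof -
    have "- (pi * ?v) * ((\<bar>a\<bar> + \<bar>b\<bar>) / 2 - 1/2) = pi * ?v / 2 + - (pi * ?v / 2) * \<bar>a\<bar> + - (pi * ?v / 2) * \<bar>b\<bar>"
      by (simp add: field_simps)
    hence "exp (- (pi * ?v) * ((\<bar>a\<bar> + \<bar>b\<bar>) / 2 - 1/2)) = exp (pi * ?v / 2) * (exp (- (pi * ?v / 2) * \<bar>a\<bar>) * exp (- (pi * ?v / 2) * \<bar>b\<bar>))"
      by (simp only: exp_add mult.assoc)
    moreover have "maj (pi * ?v / 2) k = exp (- (pi * ?v / 2) * \<bar>a\<bar>) * exp (- (pi * ?v / 2) * \<bar>b\<bar>)"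
      unfolding maj_def k a_b_t_def by simp
    ultimately show ?thesis by simp
  qed
  finally have "norm (N1 \<tau> k) \<le> K * (exp (pi * ?v / 2) * maj (pi * ?v / 2) k)"
    using N1le K0 by (meson mult_left_mono order_trans)
  thus ?thesis unfolding K_def by (simp add: mult.assoc)
qed

lemma N2_flip: "N2 \<tau> (k1, k2) = N1 \<tau> (k1, - k2)"
proof -
  have "om k1 (- k2) = om k1 k2"
    unfolding om_def minus_one_powi by (simp add: even_add)
  moreover have "dd k1 (- k2) = pp k1 k2" unfolding dd_def pp_def by simp
  moreover have "Qn k1 (- k2) = Qn k1 k2" unfolding Qn_def by simp
  ultimately show ?thesis unfolding N1_def N2_def by simp
qed

lemma flip_bij: "bij_betw (\<lambda>(k1::int, k2::int). (k1, - k2)) UNIV UNIV"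
  by (rule bij_betwI[of _ _ _ "\<lambda>(k1, k2). (k1, - k2)"]) auto

lemma sums_basic:
  assumes v: "Im \<tau> > 0"
  shows "Hol \<tau> summable_on UNIV" "N1 \<tau> summable_on UNIV" "N2 \<tau> summable_on UNIV"
    "infsum (N2 \<tau>) UNIV = infsum (N1 \<tau>) UNIV"
proof -
  have c: "pi * Im \<tau> / 2 > 0" using v by simp
  show "Hol \<tau> summable_on UNIV"
    by (rule summable_bound[OF maj_summable_cmult[OF c, of "2 * exp (2 * pi * Im \<tau>)"]]) (rule Hol_bound[OF v])
  show s1: "N1 \<tau> summable_on UNIV"
    by (rule summable_bound[OF maj_summable_cmult[OF c, of "(2 * pi * Im \<tau> / 3) powr (1/2 - 1) / sqrt pi * exp (pi * Im \<tau> / 2)"]]) (rule N1_bound[OF v])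
  have eq: "N2 \<tau> = (\<lambda>k. N1 \<tau> ((\<lambda>(k1, k2). (k1, - k2)) k))"
    by (auto simp: N2_flip)
  show "N2 \<tau> summable_on UNIV"
    unfolding eq by (subst summable_on_reindex_bij_betw[OF flip_bij]) (rule s1)
  show "infsum (N2 \<tau>) UNIV = infsum (N1 \<tau>) UNIV"
    unfolding eq by (rule infsum_reindex_bij_betw[OF flip_bij])
qed



definition Fe :: "complex \<Rightarrow> int \<Rightarrow> int \<times> int \<Rightarrow> complex" where
  "Fe \<tau> \<epsilon> = (\<lambda>(n, r).
           complex_of_real (sgn (2 * of_int r + of_int \<epsilon> + 1/3)
             * Gamma_inc (1/2) (6 * pi * (2 * of_int r + of_int \<epsilon> + 1/3)\<^sup>2 * Im \<tau>))
           * qpow \<tau> (- 3/2 * (2 * of_int r + of_int \<epsilon> + 1/3)\<^sup>2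
                     + 1/2 * (2 * of_int n + of_int \<epsilon> + 1)\<^sup>2))"

lemma Hminus_Fe: "Hminus \<tau> = - (1 / complex_of_real (sqrt pi)) *
     (\<Sum>\<epsilon>\<in>{0::int, 1}. (-1) powi \<epsilon> * infsum (Fe \<tau> \<epsilon>) UNIV)"
  unfolding Hminus_def Fe_def ..

lemma Hminus_Fe2: "Hminus \<tau> = - (1 / complex_of_real (sqrt pi)) *
     (infsum (Fe \<tau> 0) UNIV - infsum (Fe \<tau> 1) UNIV)"
  unfolding Hminus_Fe by simp

definition phi :: "int \<Rightarrow> int \<times> int \<Rightarrow> int \<times> int" where
  "phi \<epsilon> = (\<lambda>(n, r). (n - r, n - 3 * r - \<epsilon>))"

lemma phi_inj: "inj (phi \<epsilon>)"
proof (rule injI)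
  fix x y assume "phi \<epsilon> x = phi \<epsilon> y"
  thus "x = y" unfolding phi_def by (cases x; cases y) auto
qed

lemma phi_cover: "UNIV = range (phi 0) \<union> range (phi 1)"
proof -
  have R: "k \<in> range (phi ((fst k - snd k) mod 2))" for k
  proof -
    obtain k1 k2 where k: "k = (k1, k2)" by fastforce
    define j where "j = k1 - k2"
    have jd: "2 * (j div 2) + j mod 2 = j" by presburger
    have c2: "k1 + j div 2 - 3 * (j div 2) - j mod 2 = k2" using jd j_def by linarith
    have "phi (j mod 2) (k1 + j div 2, j div 2) = (k1, k2)"
      unfolding phi_def prod.case using c2 by simp
    moreover have "(fst k - snd k) mod 2 = j mod 2" unfolding k j_def by simp
    ultimately show ?thesis unfolding k by (metis rangeI)
  qed
  have M: "(a::int) mod 2 = 0 \<or> a mod 2 = 1" for a by presburger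
  have "k \<in> range (phi 0) \<union> range (phi 1)" for k
  proof (cases "(fst k - snd k) mod 2 = 0")
    case True thus ?thesis using R[of k] by simp
  next
    case False hence "(fst k - snd k) mod 2 = 1" using M by blast
    thus ?thesis using R[of k] by simp
  qed
  thus ?thesis by blast
qed

lemma phi_disj: "range (phi 0) \<inter> range (phi 1) = {}"
proof -
  have "phi 0 x \<noteq> phi 1 y" for x y
  proof
    assume "phi 0 x = phi 1 y"
    then obtain n r n' r' where "x = (n, r)" "y = (n', r')" "n - r = n' - r'" "n - 3 * r = n' - 3 * r' - 1"
      unfolding phi_def by (cases x; cases y) auto
    thus False by presburger
  qed
  thus ?thesis by (metis (no_types, lifting) disjoint_iff imageE)
qed

lemma N1_phi:
  assumes e: "\<epsilon> \<in> {0, 1}"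
  shows "N1 \<tau> (phi \<epsilon> x) = - (exp (complex_of_real pi * \<i> / 3) * (-1) powi \<epsilon> / complex_of_real (sqrt pi)) * Fe \<tau> \<epsilon> x"
proof -
  obtain n r where x: "x = (n, r)" by fastforce
  define m where "m = 2 * real_of_int r + of_int \<epsilon> + 1/3"
  have d: "dd (n - r) (n - 3 * r - \<epsilon>) = m" unfolding dd_def m_def by simp
  have Q: "Qn (n - r) (n - 3 * r - \<epsilon>) = - 3/2 * m\<^sup>2 + 1/2 * (2 * of_int n + of_int \<epsilon> + 1)\<^sup>2"
    unfolding Qn_def m_def by (simp add: power2_eq_square field_simps)
  have o: "om (n - r) (n - 3 * r - \<epsilon>) = (-1) powi \<epsilon> * exp (complex_of_real pi * \<i> / 3)"
  proof -
    have "even (n - r + (n - 3 * r - \<epsilon>)) \<longleftrightarrow> even \<epsilon>" by presburger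
    thus ?thesis unfolding om_def minus_one_powi by simp
  qed
  show ?thesis
    unfolding phi_def x prod.case N1_def d Q o Fe_def m_def[symmetric] Gt_def
    by (simp add: field_simps)
qed

lemma N1_Hminus:
  assumes v: "Im \<tau> > 0"
  shows "infsum (N1 \<tau>) UNIV = exp (complex_of_real pi * \<i> / 3) * Hminus \<tau>"
proof -
  have s: "N1 \<tau> summable_on UNIV" using sums_basic(2)[OF v] .
  define c where "c \<epsilon> = - (exp (complex_of_real pi * \<i> / 3) * (-1) powi \<epsilon> / complex_of_real (sqrt pi))" for \<epsilon> :: int
  have part: "infsum (N1 \<tau>) (range (phi \<epsilon>)) = c \<epsilon> * infsum (Fe \<tau> \<epsilon>) UNIV" if "\<epsilon> \<in> {0, 1}" for \<epsilon>
  proof -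
    have "infsum (N1 \<tau>) (range (phi \<epsilon>)) = infsum (N1 \<tau> \<circ> phi \<epsilon>) UNIV"
      by (rule infsum_reindex[OF phi_inj])
    also have "N1 \<tau> \<circ> phi \<epsilon> = (\<lambda>x. c \<epsilon> * Fe \<tau> \<epsilon> x)"
      using N1_phi[OF that] unfolding c_def by (auto simp: o_def)
    also have "infsum (\<lambda>x. c \<epsilon> * Fe \<tau> \<epsilon> x) UNIV = c \<epsilon> * infsum (Fe \<tau> \<epsilon>) UNIV"
      by (rule infsum_cmult_right')
    finally show ?thesis .
  qed
  have "infsum (N1 \<tau>) UNIV = infsum (N1 \<tau>) (range (phi 0)) + infsum (N1 \<tau>) (range (phi 1))"
    by (subst phi_cover, rule infsum_Un_disjoint[OF summable_on_subset_banach[OF s] summable_on_subset_banach[OF s] phi_disj]) auto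
  also have "\<dots> = c 0 * infsum (Fe \<tau> 0) UNIV + c 1 * infsum (Fe \<tau> 1) UNIV"
    using part by simp
  also have "\<dots> = exp (complex_of_real pi * \<i> / 3) * Hminus \<tau>"
    unfolding Hminus_Fe2 c_def by (simp add: field_simps)
  finally show ?thesis .
qed



lemma third_pos_iff: "real_of_int m + 1/3 > 0 \<longleftrightarrow> m \<ge> 0"
proof
  assume "real_of_int m + 1/3 > 0"
  hence "real_of_int m > -1" by linarith
  thus "m \<ge> 0" by linarith
next
  assume "m \<ge> 0" thus "real_of_int m + 1/3 > 0" by linarith
qed

lemma sgn_dd: "sgn (dd k1 k2) = (if k1 - k2 \<ge> 0 then 1 else -1)"
proof -
  have "dd k1 k2 = real_of_int (k1 - k2) + 1/3" unfolding dd_def by simp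
  thus ?thesis using third_pos_iff[of "k1 - k2"] dd_ne0[of k1 k2] by (auto simp: sgn_real_def)
qed

lemma sgn_pp: "sgn (pp k1 k2) = (if k1 + k2 \<ge> 0 then 1 else -1)"
proof -
  have "pp k1 k2 = real_of_int (k1 + k2) + 1/3" unfolding pp_def by simp
  thus ?thesis using third_pos_iff[of "k1 + k2"] pp_ne0[of k1 k2] by (auto simp: sgn_real_def)
qed

definition Sig :: "(nat \<times> int) set" where "Sig = Sigma UNIV (\<lambda>n. {- int n..int n})"
definition psp :: "nat \<times> int \<Rightarrow> int \<times> int" where "psp = (\<lambda>(n, j). (int n, j))"
definition psm :: "nat \<times> int \<Rightarrow> int \<times> int" where "psm = (\<lambda>(n, j). (- int n - 1, j))"

lemma psp_inj: "inj psp" unfolding psp_def by (auto simp: inj_on_def)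
lemma psm_inj: "inj psm" unfolding psm_def by (auto simp: inj_on_def)

lemma mem_Sp: "k \<in> psp ` Sig \<longleftrightarrow> fst k - snd k \<ge> 0 \<and> fst k + snd k \<ge> 0"
proof
  assume "k \<in> psp ` Sig" thus "fst k - snd k \<ge> 0 \<and> fst k + snd k \<ge> 0"
    unfolding psp_def Sig_def by auto
next
  assume a: "fst k - snd k \<ge> 0 \<and> fst k + snd k \<ge> 0"
  obtain k1 k2 where k: "k = (k1, k2)" by fastforce
  have "(nat k1, k2) \<in> Sig" "psp (nat k1, k2) = k" using a unfolding Sig_def psp_def k by auto
  thus "k \<in> psp ` Sig" by (metis imageI)
qed

lemma mem_Sm: "k \<in> psm ` Sig \<longleftrightarrow> fst k - snd k < 0 \<and> fst k + snd k < 0"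
proof
  assume "k \<in> psm ` Sig" thus "fst k - snd k < 0 \<and> fst k + snd k < 0"
    unfolding psm_def Sig_def by auto
next
  assume a: "fst k - snd k < 0 \<and> fst k + snd k < 0"
  obtain k1 k2 where k: "k = (k1, k2)" by fastforce
  have "(nat (- k1 - 1), k2) \<in> Sig" "psm (nat (- k1 - 1), k2) = k" using a unfolding Sig_def psm_def k by auto
  thus "k \<in> psm ` Sig" by (metis imageI)
qed

lemma Hol_outside: "k \<notin> psp ` Sig \<union> psm ` Sig \<Longrightarrow> Hol \<tau> k = 0"
proof -
  assume "k \<notin> psp ` Sig \<union> psm ` Sig"
  hence "sgn (dd (fst k) (snd k)) + sgn (pp (fst k) (snd k)) = 0"
    using mem_Sp[of k] mem_Sm[of k] unfolding sgn_dd sgn_pp by auto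
  note z = this
  show ?thesis unfolding Hol_def case_prod_beta z by simp
qed

lemma Sp_Sm_disj: "psp ` Sig \<inter> psm ` Sig = {}"
proof -
  have "k \<notin> psp ` Sig \<inter> psm ` Sig" for k
    using mem_Sp[of k] mem_Sm[of k] by auto
  thus ?thesis by blast
qed

definition Tt :: "complex \<Rightarrow> nat \<Rightarrow> int \<Rightarrow> complex" where
  "Tt q n j = (-1) ^ n * q powi (3 * int n ^ 2 + 2 * int n) * (1 + q powi (2 * int n + 1)) * ((-1) powi j * q powi (- (j ^ 2)))"

lemma H_Tt: "H q = (\<Sum>n. sum (Tt q n) {- int n..int n})"
  unfolding H_def Tt_def by (simp add: sum_distrib_left)

lemma Hol_pair:
  assumes xS: "x \<in> Sig"
  shows "Hol \<tau> (psp x) + Hol \<tau> (psm x) = (2 * exp (complex_of_real pi * \<i> / 3) * qpow \<tau> (1/3)) * Tt (exp (2 * complex_of_real pi * \<i> * \<tau>)) (fst x) (snd x)"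
proof -
  obtain n j where x: "x = (n, j)" by fastforce
  define q where "q = exp (2 * complex_of_real pi * \<i> * \<tau>)"
  define e where "e = exp (complex_of_real pi * \<i> / 3)"
  define A where "A = (-1::complex) ^ n * (-1) powi j"
  define P where "P = q powi (3 * int n ^ 2 + 2 * int n) * q powi (- (j ^ 2))"
  define R where "R = q powi (2 * int n + 1)"
  define u where "u = qpow \<tau> (1/3)"
  have s1: "sgn (dd (int n) j) + sgn (pp (int n) j) = (if j \<le> int n \<and> - int n \<le> j then 2 else sgn (dd (int n) j) + sgn (pp (int n) j))"
    by (auto simp: sgn_dd sgn_pp)
  have o1: "om (int n) j = A * e"
    unfolding om_def A_def e_def minus_one_powi minus_one_power_iff by (simp add: even_add)
  have o2: "om (- int n - 1) j = - A * e"
    unfolding om_def A_def e_def minus_one_powi minus_one_power_iff by (simp add: even_add)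
  have q1: "qpow \<tau> (Qn (int n) j) = u * P"
  proof -
    have eq: "Qn (int n) j = 1/3 + real_of_int (3 * int n ^ 2 + 2 * int n) + real_of_int (- (j ^ 2))"
      unfolding Qn_def by (simp add: power2_eq_square algebra_simps)
    show ?thesis unfolding eq u_def P_def q_def qpow_add qpow_int by (simp only: mult.assoc)
  qed
  have q2: "qpow \<tau> (Qn (- int n - 1) j) = u * P * R"
  proof -
    have eq: "Qn (- int n - 1) j = 1/3 + real_of_int (3 * int n ^ 2 + 2 * int n) + real_of_int (- (j ^ 2)) + real_of_int (2 * int n + 1)"
      unfolding Qn_def by (simp add: power2_eq_square algebra_simps)
    show ?thesis unfolding eq u_def P_def R_def q_def qpow_add qpow_int by (simp only: mult.assoc)
  qed
  have jr: "- int n \<le> j" "j \<le> int n" using xS unfolding x Sig_def by auto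
  have h1: "Hol \<tau> (psp x) = 2 * (A * e) * (u * P)"
    unfolding psp_def x prod.case Hol_def sgn_dd sgn_pp o1 q1 using jr by simp
  have h2: "Hol \<tau> (psm x) = (-2) * (- A * e) * (u * P * R)"
    unfolding psm_def x prod.case Hol_def sgn_dd sgn_pp o2 q2 using jr by simp
  have t: "Tt q n j = A * P * (1 + R)"
    unfolding Tt_def A_def P_def R_def by (simp add: algebra_simps)
  have fx: "fst x = n" "snd x = j" using x by auto
  show ?thesis unfolding h1 h2 fx q_def[symmetric] t e_def[symmetric] u_def[symmetric]
    by (simp add: algebra_simps)
qed



lemma Hol_sum:
  assumes v: "Im \<tau> > 0"
  shows "infsum (Hol \<tau>) UNIV = (2 * exp (complex_of_real pi * \<i> / 3) * qpow \<tau> (1/3)) * H (exp (2 * complex_of_real pi * \<i> * \<tau>))"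
proof -
  define C where "C = 2 * exp (complex_of_real pi * \<i> / 3) * qpow \<tau> (1/3)"
  define q where "q = exp (2 * complex_of_real pi * \<i> * \<tau>)"
  define f where "f = (\<lambda>x. Tt q (fst x) (snd x))"
  have C0: "C \<noteq> 0" unfolding C_def qpow_def by simp
  have s: "Hol \<tau> summable_on UNIV" using sums_basic(1)[OF v] .
  have sp: "Hol \<tau> summable_on psp ` Sig" by (rule summable_on_subset_banach[OF s]) auto
  have sm: "Hol \<tau> summable_on psm ` Sig" by (rule summable_on_subset_banach[OF s]) auto
  have ip: "inj_on psp Sig" by (rule inj_on_subset[OF psp_inj subset_UNIV])
  have im: "inj_on psm Sig" by (rule inj_on_subset[OF psm_inj subset_UNIV])
  have sp': "(Hol \<tau> \<circ> psp) summable_on Sig" using sp summable_on_reindex[OF ip] by blast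
  have sm': "(Hol \<tau> \<circ> psm) summable_on Sig" using sm summable_on_reindex[OF im] by blast
  have pair: "Hol \<tau> (psp x) + Hol \<tau> (psm x) = C * f x" if "x \<in> Sig" for x
    unfolding C_def f_def q_def using Hol_pair[OF that] .
  have "infsum (Hol \<tau>) UNIV = infsum (Hol \<tau>) (psp ` Sig \<union> psm ` Sig)"
    by (rule infsum_cong_neutral) (use Hol_outside in auto)
  also have "\<dots> = infsum (Hol \<tau>) (psp ` Sig) + infsum (Hol \<tau>) (psm ` Sig)"
    by (rule infsum_Un_disjoint[OF sp sm Sp_Sm_disj])
  also have "\<dots> = infsum (Hol \<tau> \<circ> psp) Sig + infsum (Hol \<tau> \<circ> psm) Sig"
    by (simp add: infsum_reindex[OF ip] infsum_reindex[OF im])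
  also have "\<dots> = infsum (\<lambda>x. (Hol \<tau> \<circ> psp) x + (Hol \<tau> \<circ> psm) x) Sig"
    by (rule infsum_add[OF sp' sm', symmetric])
  also have "\<dots> = infsum (\<lambda>x. C * f x) Sig"
    by (rule infsum_cong) (simp add: pair)
  also have "\<dots> = C * infsum f Sig" by (rule infsum_cmult_right')
  finally have 1: "infsum (Hol \<tau>) UNIV = C * infsum f Sig" .
  have "(\<lambda>x. (Hol \<tau> \<circ> psp) x + (Hol \<tau> \<circ> psm) x) summable_on Sig"
    by (rule summable_on_add[OF sp' sm'])
  hence "(\<lambda>x. C * f x) summable_on Sig"
    by (rule summable_on_cong[THEN iffD1, rotated]) (simp add: pair)
  hence fs: "f summable_on Sigma UNIV (\<lambda>n. {- int n..int n})"
    unfolding Sig_def using summable_on_cmult_right'[OF C0] by blast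
  have 2: "infsum f Sig = infsum (\<lambda>n. sum (Tt q n) {- int n..int n}) UNIV"
  proof -
    have "infsum f Sig = infsum (\<lambda>n. infsum (\<lambda>j. f (n, j)) {- int n..int n}) UNIV"
      unfolding Sig_def by (rule infsum_Sigma_banach[OF fs, symmetric])
    thus ?thesis unfolding f_def by simp
  qed
  have "(\<lambda>n. infsum (\<lambda>j. f (n, j)) {- int n..int n}) summable_on UNIV"
    by (rule summable_on_SigmaD[OF fs]) simp
  hence "(\<lambda>n. sum (Tt q n) {- int n..int n}) summable_on UNIV" unfolding f_def by simp
  hence "(\<lambda>n. sum (Tt q n) {- int n..int n}) sums infsum (\<lambda>n. sum (Tt q n) {- int n..int n}) UNIV"
    by (intro has_sum_imp_sums has_sum_infsum)
  hence "H q = infsum (\<lambda>n. sum (Tt q n) {- int n..int n}) UNIV"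
    unfolding H_Tt by (rule sums_unique[symmetric])
  thus ?thesis using 1 2 unfolding C_def q_def by simp
qed



theorem proposition3p1:
  fixes \<tau> :: complex
  assumes "Im \<tau> > 0"
  shows "Hhat \<tau> = exp (- complex_of_real pi * \<i> / 3) / 2 * theta_ab \<tau>"
proof -
  note v = assms
  define e where "e = exp (complex_of_real pi * \<i> / 3)"
  have th: "theta_ab \<tau> = infsum (\<lambda>k. Hol \<tau> k + N1 \<tau> k + N2 \<tau> k) UNIV"
    unfolding theta_ab_def by (rule infsum_cong) (use term_decomp[OF v] in \<open>auto simp: case_prod_beta\<close>)
  also have "\<dots> = infsum (Hol \<tau>) UNIV + infsum (N1 \<tau>) UNIV + infsum (N2 \<tau>) UNIV"
    using sums_basic[OF v] by (simp add: infsum_add summable_on_add)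
  also have "\<dots> = 2 * e * (qpow \<tau> (1/3) * H (exp (2 * complex_of_real pi * \<i> * \<tau>)) + Hminus \<tau>)"
    unfolding sums_basic(4)[OF v] Hol_sum[OF v] N1_Hminus[OF v] e_def by (simp add: algebra_simps)
  finally have "theta_ab \<tau> = 2 * e * Hhat \<tau>" unfolding Hhat_def .
  moreover have "exp (- complex_of_real pi * \<i> / 3) * e = 1"
    unfolding e_def by (simp add: exp_add[symmetric])
  ultimately show ?thesis by (simp add: field_simps)
qed



end
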